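(* Let $H$ be a complex Hilbert space with inner product $\langle\cdot,\cdot\rangle$ and norm $|\cdot|$, and let $-A$ be the generator of a uniformly bounded holomorphic semigroup $e^{-tA}$ in $H$. Assume $\nu(A)\subset\{z\in\mathbb{C}:\operatorname{Re}z>0\}$ and that $A$ has an accretive square, i.e. $\nu(A^2)\subset\{z\in\mathbb{C}:\operatorname{Re}z\ge0\}$. Then for every $u_0\neq0$ the height function $h(t)=|e^{-tA}u_0|$ is strictly convex and strictly decreasing on $[0,\infty[$, with $h''(t)>0$ for all $t>0$, and $h$ is differentiable from the right at $t=0$ with derivative in $[-\infty,0]$ satisfying $h'(0)=\inf_{t>0}h'(t)\le -m(A)$ when $|u_0|=1$. If $u_0\in D(A)$ with $|u_0|=1$, then $h'(0)=-\operatorname{Re}\langle Au_0,u_0\rangle$ and $h\in C^1([0,\infty[,\mathbb{R})\cap C^\infty(]0,\infty[,\mathbb{R})$.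
   Context: A semigroup $e^{-tA}$ in $\mathbb{B}(H)$ is uniformly bounded if $\|e^{-tA}\|\le M$ for all $t\ge0$; it is holomorphic if it extends to a holomorphic family $e^{-zA}$ for $z$ in an open sector $\{z\in\mathbb{C}:|\arg z|<\delta\}$ for some $\delta>0$. For an operator $T$ in $H$, $\nu(T)=\{\langle Tx,x\rangle: x\in D(T),\ |x|=1\}$ is its numerical range, and $m(A)=\inf\operatorname{Re}\nu(A)$. *)

theory Defs
  imports "HOL-Analysis.Analysis"
begin

text \<open>A complex Hilbert space is modelled as a real Hilbert space (real inner product,
  complete) together with a complex structure: an isometric real-linear map imul
  (multiplication by the imaginary unit) with imul (imul x) = - x.  Complex scalar
  multiplication and the complex inner product (linear in the first argument) are
  recovered below.  The real inner product is the real part of the complex one, and the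
  norm is the Hilbert norm.\<close>

class complex_hilbert = real_inner + complete_space +
  fixes imul :: "'a \<Rightarrow> 'a"
  assumes imul_add: "imul (x + y) = imul x + imul y"
    and imul_scaleR: "imul (r *\<^sub>R x) = r *\<^sub>R imul x"
    and imul_imul: "imul (imul x) = - x"
    and inner_imul: "inner (imul x) (imul y) = inner x y"

definition cscale :: "complex \<Rightarrow> 'a::complex_hilbert \<Rightarrow> 'a" where
  "cscale c x = Re c *\<^sub>R x + Im c *\<^sub>R imul x"

definition cinner :: "'a::complex_hilbert \<Rightarrow> 'a \<Rightarrow> complex" where
  "cinner x y = Complex (inner x y) (inner x (imul y))"

definition bounded_clinear :: "('a::complex_hilbert \<Rightarrow> 'a) \<Rightarrow> bool" where
  "bounded_clinear L \<longleftrightarrow> bounded_linear L \<and> (\<forall>x. L (imul x) = imul (L x))"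

definition C0_semigroup :: "(real \<Rightarrow> 'a::complex_hilbert \<Rightarrow> 'a) \<Rightarrow> bool" where
  "C0_semigroup T \<longleftrightarrow>
     (\<forall>t\<ge>0. bounded_clinear (T t)) \<and> T 0 = id \<and>
     (\<forall>s\<ge>0. \<forall>t\<ge>0. T (s + t) = T s \<circ> T t) \<and>
     (\<forall>x. continuous_on {0..} (\<lambda>t. T t x))"

definition neg_generator :: "(real \<Rightarrow> 'a::complex_hilbert \<Rightarrow> 'a) \<Rightarrow> ('a \<Rightarrow> 'a) \<Rightarrow> 'a set \<Rightarrow> bool" where
  "neg_generator T A D \<longleftrightarrow>
     D = {x. \<exists>y. ((\<lambda>t. (1 / t) *\<^sub>R (T t x - x)) \<longlongrightarrow> y) (at_right 0)} \<and>
     (\<forall>x\<in>D. ((\<lambda>t. (1 / t) *\<^sub>R (T t x - x)) \<longlongrightarrow> - A x) (at_right 0))"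

definition uniformly_bounded_sg :: "(real \<Rightarrow> 'a::complex_hilbert \<Rightarrow> 'a) \<Rightarrow> bool" where
  "uniformly_bounded_sg T \<longleftrightarrow> (\<exists>M. \<forall>t\<ge>0. onorm (T t) \<le> M)"

definition sector :: "real \<Rightarrow> complex set" where
  "sector \<delta> = {z. z \<noteq> 0 \<and> \<bar>Arg z\<bar> < \<delta>}"

definition op_holomorphic_on :: "(complex \<Rightarrow> 'a::complex_hilbert \<Rightarrow> 'a) \<Rightarrow> complex set \<Rightarrow> bool" where
  "op_holomorphic_on F S \<longleftrightarrow>
     (\<forall>z\<in>S. \<exists>L. bounded_linear L \<and>
        ((\<lambda>w. onorm (\<lambda>x. cscale (inverse (w - z)) (F w x - F z x) - L x)) \<longlongrightarrow> 0) (at z))"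

definition holomorphic_sg :: "(real \<Rightarrow> 'a::complex_hilbert \<Rightarrow> 'a) \<Rightarrow> bool" where
  "holomorphic_sg T \<longleftrightarrow>
     (\<exists>\<delta>>0. \<exists>F. (\<forall>t>0. F (complex_of_real t) = T t) \<and>
        (\<forall>z\<in>sector \<delta>. bounded_clinear (F z)) \<and> op_holomorphic_on F (sector \<delta>))"

definition num_range :: "('a::complex_hilbert \<Rightarrow> 'a) \<Rightarrow> 'a set \<Rightarrow> complex set" where
  "num_range A D = {cinner (A x) x | x. x \<in> D \<and> norm x = 1}"

definition m_of :: "('a::complex_hilbert \<Rightarrow> 'a) \<Rightarrow> 'a set \<Rightarrow> real" where
  "m_of A D = Inf (Re ` num_range A D)"

definition dom_sq :: "('a \<Rightarrow> 'a) \<Rightarrow> 'a set \<Rightarrow> 'a set" where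
  "dom_sq A D = {x \<in> D. A x \<in> D}"

definition strict_convex_on :: "real set \<Rightarrow> (real \<Rightarrow> real) \<Rightarrow> bool" where
  "strict_convex_on S f \<longleftrightarrow>
     (\<forall>x\<in>S. \<forall>y\<in>S. x \<noteq> y \<longrightarrow> (\<forall>u. 0 < u \<and> u < 1 \<longrightarrow>
        f ((1 - u) * x + u * y) < (1 - u) * f x + u * f y))"

text \<open>C^1 on S (one-sided derivatives at boundary points of S, via at t within S).\<close>
definition C1_on :: "real set \<Rightarrow> (real \<Rightarrow> real) \<Rightarrow> bool" where
  "C1_on S f \<longleftrightarrow> (\<exists>f'. (\<forall>t\<in>S. (f has_real_derivative f' t) (at t within S)) \<and> continuous_on S f')"

definition Cinf_on :: "real set \<Rightarrow> (real \<Rightarrow> real) \<Rightarrow> bool" where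
  "Cinf_on S f \<longleftrightarrow> (\<exists>Df :: nat \<Rightarrow> real \<Rightarrow> real. (\<forall>t\<in>S. Df 0 t = f t) \<and>
     (\<forall>n. \<forall>t\<in>S. (Df n has_real_derivative Df (Suc n) t) (at t within S)))"

end

theory Submission
  imports Defs "HOL-Complex_Analysis.Complex_Analysis"
begin

lemma inner_imul_self: "inner x (imul x) = 0"
proof -
  have "inner (imul x) (imul (imul x)) = inner x (imul x)" by (rule inner_imul)
  hence "inner (imul x) (- x) = inner x (imul x)" by (simp add: imul_imul)
  thus ?thesis by (simp add: inner_commute)
qed

lemma inner_imul_swap: "inner (imul x) y = - inner x (imul y)"
proof -
  have "inner (imul (imul x)) (imul y) = inner (imul x) y" by (rule inner_imul)
  thus ?thesis by (simp add: imul_imul)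
qed

lemma norm_imul: "norm (imul x) = norm x"
  by (simp add: norm_eq_sqrt_inner inner_imul)

lemma imul_minus: "imul (- x) = - imul x"
  using imul_scaleR[of "-1" x] by simp

lemma imul_diff: "imul (x - y) = imul x - imul y"
  using imul_add[of x "- y"] by (simp add: imul_minus)

lemma bounded_linear_imul: "bounded_linear imul"
  by (rule bounded_linear_intro[where K=1]) (auto simp: imul_add imul_scaleR norm_imul)

lemma bounded_linear_cscale: "bounded_linear (cscale c)"
  unfolding cscale_def
  by (intro bounded_linear_add bounded_linear_scaleR_right bounded_linear_ident
      bounded_linear_compose[OF bounded_linear_scaleR_right bounded_linear_imul])

lemma cscale_of_real: "cscale (complex_of_real r) x = r *\<^sub>R x"
  by (simp add: cscale_def)

lemma Re_cinner: "Re (cinner x y) = inner x y"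
  by (simp add: cinner_def)

lemma Im_cinner: "Im (cinner x y) = inner x (imul y)"
  by (simp add: cinner_def)

lemma cinner_cscale_left: "cinner (cscale c x) y = c * cinner x y"
  by (simp add: cinner_def cscale_def complex_eq_iff inner_add_left inner_imul_swap inner_imul imul_imul algebra_simps)

lemma cinner_diff_left: "cinner (x - x') y = cinner x y - cinner x' y"
  by (simp add: cinner_def complex_eq_iff inner_diff_left)

lemma bclin_bl: "bounded_clinear L \<Longrightarrow> bounded_linear L"
  by (simp add: bounded_clinear_def)

lemma vderiv_iff:
  "(f has_vector_derivative D) (at x within S) \<longleftrightarrow>
   ((\<lambda>y. (1 / (y - x)) *\<^sub>R (f y - f x)) \<longlongrightarrow> D) (at x within S)"
proof -
  have e: "\<forall>\<^sub>F y in at x within S. norm ((f y - f x) - (y - x) *\<^sub>R D) / norm (y - x)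
            = norm ((1 / (y - x)) *\<^sub>R (f y - f x) - D)"
  proof (rule eventually_mono[OF eventually_neq_at_within[of x x S]])
    fix y :: real assume "y \<noteq> x"
    hence "(1 / (y - x)) *\<^sub>R (f y - f x) - D = (1 / (y - x)) *\<^sub>R ((f y - f x) - (y - x) *\<^sub>R D)"
      by (simp add: scaleR_diff_right)
    thus "norm ((f y - f x) - (y - x) *\<^sub>R D) / norm (y - x) = norm ((1 / (y - x)) *\<^sub>R (f y - f x) - D)"
      by (simp add: divide_inverse mult.commute)
  qed
  have "(f has_vector_derivative D) (at x within S) \<longleftrightarrow>
     ((\<lambda>y. norm ((f y - f x) - (y - x) *\<^sub>R D) / norm (y - x)) \<longlongrightarrow> 0) (at x within S)"
    unfolding has_vector_derivative_def has_derivative_iff_norm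
    by (simp add: bounded_linear_scaleR_left)
  also have "\<dots> \<longleftrightarrow> ((\<lambda>y. norm ((1 / (y - x)) *\<^sub>R (f y - f x) - D)) \<longlongrightarrow> 0) (at x within S)"
    by (rule tendsto_cong[OF e])
  also have "\<dots> \<longleftrightarrow> ((\<lambda>y. (1 / (y - x)) *\<^sub>R (f y - f x) - D) \<longlongrightarrow> 0) (at x within S)"
    by (rule tendsto_norm_zero_iff)
  also have "\<dots> \<longleftrightarrow> ((\<lambda>y. (1 / (y - x)) *\<^sub>R (f y - f x)) \<longlongrightarrow> D) (at x within S)"
    by (rule LIM_zero_iff)
  finally show ?thesis .
qed

locale sgA =
  fixes T :: "real \<Rightarrow> 'a::complex_hilbert \<Rightarrow> 'a" and A :: "'a \<Rightarrow> 'a" and D :: "'a set"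
  assumes C0: "C0_semigroup T" and gen: "neg_generator T A D"
begin

lemma Tbl: "t \<ge> 0 \<Longrightarrow> bounded_linear (T t)"
  using C0 by (auto simp: C0_semigroup_def bounded_clinear_def)

lemma Tcl: "t \<ge> 0 \<Longrightarrow> bounded_clinear (T t)"
  using C0 by (auto simp: C0_semigroup_def)

lemma T0: "T 0 x = x"
  using C0 by (auto simp: C0_semigroup_def)

lemma Tadd: "s \<ge> 0 \<Longrightarrow> t \<ge> 0 \<Longrightarrow> T (s + t) x = T s (T t x)"
  using C0 unfolding C0_semigroup_def by (metis comp_apply)

lemma Tcont: "continuous_on {0..} (\<lambda>t. T t x)"
  using C0 by (auto simp: C0_semigroup_def)

lemma Tlin_diff: "t \<ge> 0 \<Longrightarrow> T t (x - y) = T t x - T t y"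
  using Tbl[of t] by (simp add: linear_diff bounded_linear.linear)

lemma Tlin_scale: "t \<ge> 0 \<Longrightarrow> T t (c *\<^sub>R x) = c *\<^sub>R T t x"
  using Tbl[of t] by (simp add: linear_scale bounded_linear.linear)

lemma Tlin_minus: "t \<ge> 0 \<Longrightarrow> T t (- x) = - T t x"
  using Tbl[of t] by (simp add: linear_neg bounded_linear.linear)

lemma Dlim: "x \<in> D \<Longrightarrow> ((\<lambda>t. (1 / t) *\<^sub>R (T t x - x)) \<longlongrightarrow> - A x) (at_right 0)"
  using gen by (auto simp: neg_generator_def)

lemma Dintro:
  assumes "((\<lambda>t. (1 / t) *\<^sub>R (T t x - x)) \<longlongrightarrow> y) (at_right 0)"
  shows "x \<in> D \<and> A x = - y"
proof -
  have xD: "x \<in> D" using gen assms by (auto simp: neg_generator_def)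
  have "- A x = y"
    using tendsto_unique[OF _ Dlim[OF xD] assms] by simp
  thus ?thesis using xD by auto
qed

lemma comm:
  assumes y: "y \<in> D" and s: "s \<ge> 0"
  shows "T s y \<in> D \<and> A (T s y) = T s (A y)"
proof -
  have ev: "\<forall>\<^sub>F t in at_right 0. T s ((1 / t) *\<^sub>R (T t y - y)) = (1 / t) *\<^sub>R (T t (T s y) - T s y)"
  proof (rule eventually_mono[OF eventually_at_right_less])
    fix t :: real assume "0 < t"
    have "T t (T s y) = T s (T t y)"
      using Tadd[of t s y] Tadd[of s t y] s \<open>0 < t\<close> by (simp add: add.commute)
    thus "T s ((1 / t) *\<^sub>R (T t y - y)) = (1 / t) *\<^sub>R (T t (T s y) - T s y)"
      using s by (simp add: Tlin_scale Tlin_diff)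
  qed
  have "((\<lambda>t. T s ((1 / t) *\<^sub>R (T t y - y))) \<longlongrightarrow> T s (- A y)) (at_right 0)"
    by (rule bounded_linear.tendsto[OF Tbl[OF s] Dlim[OF y]])
  hence "((\<lambda>t. (1 / t) *\<^sub>R (T t (T s y) - T s y)) \<longlongrightarrow> T s (- A y)) (at_right 0)"
    using tendsto_cong[OF ev] by simp
  from Dintro[OF this] show ?thesis using s by (simp add: Tlin_minus)
qed

lemma Dscale:
  assumes x: "x \<in> D"
  shows "c *\<^sub>R x \<in> D \<and> A (c *\<^sub>R x) = c *\<^sub>R A x"
proof -
  have ev: "\<forall>\<^sub>F t in at_right 0. c *\<^sub>R ((1 / t) *\<^sub>R (T t x - x)) = (1 / t) *\<^sub>R (T t (c *\<^sub>R x) - c *\<^sub>R x)"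
  proof (rule eventually_mono[OF eventually_at_right_less])
    fix t :: real assume "0 < t"
    thus "c *\<^sub>R ((1 / t) *\<^sub>R (T t x - x)) = (1 / t) *\<^sub>R (T t (c *\<^sub>R x) - c *\<^sub>R x)"
      by (simp add: Tlin_scale algebra_simps)
  qed
  have "((\<lambda>t. c *\<^sub>R ((1 / t) *\<^sub>R (T t x - x))) \<longlongrightarrow> c *\<^sub>R (- A x)) (at_right 0)"
    by (intro tendsto_intros Dlim[OF x])
  hence "((\<lambda>t. (1 / t) *\<^sub>R (T t (c *\<^sub>R x) - c *\<^sub>R x)) \<longlongrightarrow> c *\<^sub>R (- A x)) (at_right 0)"
    using tendsto_cong[OF ev] by simp
  from Dintro[OF this] show ?thesis by simp
qed

end

locale sgH = sgA T A D
  for T :: "real \<Rightarrow> 'a::complex_hilbert \<Rightarrow> 'a" and A D +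
  fixes F :: "complex \<Rightarrow> 'a \<Rightarrow> 'a" and \<delta> :: real
  assumes dpos: "\<delta> > 0"
    and FT: "\<And>t. t > 0 \<Longrightarrow> F (complex_of_real t) = T t"
    and Fcl: "\<And>z. z \<in> sector \<delta> \<Longrightarrow> bounded_clinear (F z)"
    and Fhol: "op_holomorphic_on F (sector \<delta>)"
begin

lemma derivT:
  assumes t: "t > 0"
  shows "((\<lambda>s. T s x) has_vector_derivative - A (T t x)) (at t) \<and> T t x \<in> D"
proof -
  define z where "z = complex_of_real t"
  have zS: "z \<in> sector \<delta>" using t dpos by (simp add: z_def sector_def)
  then obtain L where bl: "bounded_linear L" and
    lim: "((\<lambda>w. onorm (\<lambda>x. cscale (inverse (w - z)) (F w x - F z x) - L x)) \<longlongrightarrow> 0) (at z)"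
    using Fhol unfolding op_holomorphic_on_def by blast
  have fl: "filterlim complex_of_real (at z) (at t)"
  proof (rule filterlim_atI)
    show "(complex_of_real \<longlongrightarrow> z) (at t)" unfolding z_def
      by (intro tendsto_intros)
    show "\<forall>\<^sub>F s in at t. complex_of_real s \<noteq> z"
      using eventually_neq_at_within[of t t UNIV] by (rule eventually_mono) (simp add: z_def)
  qed
  have lim2: "((\<lambda>s. onorm (\<lambda>x. cscale (inverse (complex_of_real s - z)) (F (complex_of_real s) x - F z x) - L x)) \<longlongrightarrow> 0) (at t)"
    using filterlim_compose[OF lim fl] by simp
  have evpos: "\<forall>\<^sub>F s in at t. 0 < s"
    using order_tendstoD(1)[OF tendsto_ident_at t] .
  have ev: "\<forall>\<^sub>F s in at t. norm ((1 / (s - t)) *\<^sub>R (T s x - T t x) - L x)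
      \<le> onorm (\<lambda>x. cscale (inverse (complex_of_real s - z)) (F (complex_of_real s) x - F z x) - L x) * norm x"
    using evpos
  proof (rule eventually_mono)
    fix s :: real assume s: "0 < s"
    have eq: "(\<lambda>x. cscale (inverse (complex_of_real s - z)) (F (complex_of_real s) x - F z x) - L x)
        = (\<lambda>x. (1 / (s - t)) *\<^sub>R (T s x - T t x) - L x)"
    proof
      fix x
      have inv: "inverse (complex_of_real s - z) = complex_of_real (1 / (s - t))"
        by (simp add: z_def of_real_diff[symmetric] divide_inverse del: of_real_diff)
      thus "cscale (inverse (complex_of_real s - z)) (F (complex_of_real s) x - F z x) - L x
          = (1 / (s - t)) *\<^sub>R (T s x - T t x) - L x"
        by (simp only: inv cscale_of_real, simp add: z_def FT[OF s] FT[OF t])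
    qed
    have "bounded_linear (\<lambda>x. (1 / (s - t)) *\<^sub>R (T s x - T t x) - L x)"
      using Tbl[of s] Tbl[of t] s t bl
      by (intro bounded_linear_sub bounded_linear_compose[OF bounded_linear_scaleR_right]) auto
    from onorm[OF this, of x] show "norm ((1 / (s - t)) *\<^sub>R (T s x - T t x) - L x)
      \<le> onorm (\<lambda>x. cscale (inverse (complex_of_real s - z)) (F (complex_of_real s) x - F z x) - L x) * norm x"
      by (simp add: eq)
  qed
  have "((\<lambda>s. onorm (\<lambda>x. cscale (inverse (complex_of_real s - z)) (F (complex_of_real s) x - F z x) - L x) * norm x) \<longlongrightarrow> 0 * norm x) (at t)"
    by (intro tendsto_intros lim2)
  hence "((\<lambda>s. (1 / (s - t)) *\<^sub>R (T s x - T t x) - L x) \<longlongrightarrow> 0) (at t)"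
    using Lim_null_comparison[OF ev] by simp
  hence q: "((\<lambda>s. (1 / (s - t)) *\<^sub>R (T s x - T t x)) \<longlongrightarrow> L x) (at t)"
    by (simp add: LIM_zero_iff)
  have fl2: "filterlim (\<lambda>h. t + h) (at t) (at_right 0)"
  proof (rule filterlim_atI)
    show "((\<lambda>h. t + h) \<longlongrightarrow> t) (at_right 0)"
      using tendsto_add[OF tendsto_const[of t] tendsto_ident_at[of 0 "{0<..}"]] by simp
    show "\<forall>\<^sub>F h in at_right 0. t + h \<noteq> t"
      using eventually_at_right_less[of "0::real"] by (rule eventually_mono) simp
  qed
  have q2: "((\<lambda>h. (1 / ((t + h) - t)) *\<^sub>R (T (t + h) x - T t x)) \<longlongrightarrow> L x) (at_right 0)"
    using filterlim_compose[OF q fl2] by simp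
  have ev2: "\<forall>\<^sub>F h in at_right 0. (1 / ((t + h) - t)) *\<^sub>R (T (t + h) x - T t x) = (1 / h) *\<^sub>R (T h (T t x) - T t x)"
    using eventually_at_right_less[of "0::real"]
  proof (rule eventually_mono)
    fix h :: real assume "0 < h"
    thus "(1 / ((t + h) - t)) *\<^sub>R (T (t + h) x - T t x) = (1 / h) *\<^sub>R (T h (T t x) - T t x)"
      using Tadd[of h t x] t by (simp add: add.commute)
  qed
  have "((\<lambda>h. (1 / h) *\<^sub>R (T h (T t x) - T t x)) \<longlongrightarrow> L x) (at_right 0)"
    using tendsto_cong[OF ev2] q2 by simp
  from Dintro[OF this] have D1: "T t x \<in> D" and D2: "L x = - A (T t x)" by auto
  have "((\<lambda>s. T s x) has_vector_derivative L x) (at t)"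
    using q by (simp add: vderiv_iff)
  thus ?thesis using D1 D2 by simp
qed

lemma TD: "t > 0 \<Longrightarrow> T t x \<in> D"
  using derivT by blast

lemma K:
  "t > 0 \<Longrightarrow> s \<ge> 0 \<Longrightarrow> (A ^^ n) (T (s + t) x) = T s ((A ^^ n) (T t x)) \<and> (A ^^ n) (T t x) \<in> D"
proof (induction n arbitrary: s t)
  case 0
  then show ?case using Tadd[of s t x] TD[of t x] by simp
next
  case (Suc n)
  define y where "y = (A ^^ n) (T t x)"
  have yD: "y \<in> D" using Suc.IH[of t s] Suc.prems by (simp add: y_def)
  have e1: "(A ^^ Suc n) (T (s + t) x) = T s ((A ^^ Suc n) (T t x))"
    using Suc.IH[of t s] Suc.prems comm[OF yD, of s] by (simp add: y_def)
  define y' where "y' = (A ^^ n) (T (t/2) x)"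
  have y'D: "y' \<in> D" using Suc.IH[of "t/2" 0] Suc.prems by (simp add: y'_def)
  have "y = T (t/2) y'"
    using Suc.IH[of "t/2" "t/2"] Suc.prems by (simp add: y_def y'_def)
  hence "A y = T (t/2) (A y')" using comm[OF y'D, of "t/2"] Suc.prems by simp
  hence "A y \<in> D" using TD[of "t/2" "A y'"] Suc.prems by simp
  thus ?case using e1 by (simp add: y_def)
qed

lemma dK:
  assumes t: "t > 0"
  shows "((\<lambda>r. (A ^^ n) (T r x)) has_vector_derivative - (A ^^ Suc n) (T t x)) (at t)"
proof -
  define y' where "y' = (A ^^ n) (T (t/2) x)"
  have d1: "((\<lambda>r. r - t/2) has_vector_derivative 1) (at t)"
    using has_vector_derivative_diff[OF has_vector_derivative_id has_vector_derivative_const, of "t/2" "at t"] by simp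
  have d2: "((\<lambda>s. T s y') has_vector_derivative - A (T (t/2) y')) (at ((\<lambda>r. r - t/2) t))"
    using derivT[of "t/2" y'] t by simp
  have "T (t/2) y' = (A ^^ n) (T t x)"
    using K[of "t/2" "t/2" n x] t by (simp add: y'_def)
  hence d3: "(((\<lambda>s. T s y') \<circ> (\<lambda>r. r - t/2)) has_vector_derivative - (A ^^ Suc n) (T t x)) (at t)"
    using vector_diff_chain_at[OF d1 d2] by simp
  show ?thesis
  proof (rule has_vector_derivative_transform_within_open[OF d3, of "{t/2<..}"])
    show "open {t/2<..}" by simp
    show "t \<in> {t/2<..}" using t by simp
    fix r assume "r \<in> {t/2<..}"
    hence "(A ^^ n) (T ((r - t/2) + t/2) x) = T (r - t/2) y'"
      using K[of "t/2" "r - t/2" n x] t by (simp add: y'_def)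
    thus "((\<lambda>s. T s y') \<circ> (\<lambda>r. r - t/2)) r = (A ^^ n) (T r x)" by simp
  qed
qed

end

context sgA
begin

lemma Tright: "((\<lambda>s. T s x) \<longlongrightarrow> x) (at_right 0)"
proof -
  have "((\<lambda>s. T s x) \<longlongrightarrow> T 0 x) (at 0 within {0..})"
    using Tcont[of x] by (simp add: continuous_on_def)
  hence "((\<lambda>s. T s x) \<longlongrightarrow> T 0 x) (at 0 within {0<..})"
    by (rule tendsto_within_subset) auto
  thus ?thesis by (simp add: T0)
qed

end

context sgH
begin

definition SS :: "complex set" where "SS = {z. 0 < Re z \<and> \<bar>Im z\<bar> < \<delta> * Re z}"

lemma SS_sector: "SS \<subseteq> sector \<delta>"
proof
  fix z assume "z \<in> SS"
  hence re: "0 < Re z" and im: "\<bar>Im z\<bar> < \<delta> * Re z" by (auto simp: SS_def)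
  have "\<bar>Arg z\<bar> = \<bar>arctan (Im z / Re z)\<bar>" using arg_conv_arctan[OF re] by simp
  also have "\<dots> \<le> \<bar>Im z / Re z\<bar>" by (rule abs_arctan_le)
  also have "\<dots> = \<bar>Im z\<bar> / Re z" using re by (simp add: abs_divide)
  also have "\<dots> < \<delta>" using re im by (simp add: divide_less_eq)
  finally have "\<bar>Arg z\<bar> < \<delta>" .
  moreover have "z \<noteq> 0" using re by auto
  ultimately show "z \<in> sector \<delta>" by (simp add: sector_def)
qed

lemma SS_open: "open SS"
proof -
  have "SS = {z. 0 < Re z} \<inter> {z. \<bar>Im z\<bar> < \<delta> * Re z}" by (auto simp: SS_def)
  moreover have "open {z. 0 < Re z}" by (rule open_halfspace_Re_gt)
  moreover have "open {z::complex. \<bar>Im z\<bar> < \<delta> * Re z}"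
    by (rule open_Collect_less) (intro continuous_intros)+
  ultimately show ?thesis by auto
qed

lemma SS_convex: "convex SS"
  unfolding convex_def
proof (intro ballI allI impI)
  fix x y :: complex and u v :: real
  assume x: "x \<in> SS" and y: "y \<in> SS" and u: "0 \<le> u" and v: "0 \<le> v" and s: "u + v = 1"
  have xr: "0 < Re x" "\<bar>Im x\<bar> < \<delta> * Re x" and yr: "0 < Re y" "\<bar>Im y\<bar> < \<delta> * Re y"
    using x y by (auto simp: SS_def)
  have r1: "0 < u * Re x + v * Re y"
  proof (cases "u = 0")
    case True thus ?thesis using s yr by simp
  next
    case False hence "0 < u * Re x" using u xr by simp
    moreover have "0 \<le> v * Re y" using v yr by simp
    ultimately show ?thesis by linarith
  qed
  have a1: "\<bar>u * Im x + v * Im y\<bar> \<le> u * \<bar>Im x\<bar> + v * \<bar>Im y\<bar>"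
    using u v by (simp add: abs_triangle_ineq[THEN order_trans] abs_mult)
  have a2: "u * \<bar>Im x\<bar> \<le> u * (\<delta> * Re x)" using u xr by (simp add: mult_left_mono)
  have a3: "v * \<bar>Im y\<bar> \<le> v * (\<delta> * Re y)" using v yr by (simp add: mult_left_mono)
  have a4: "u * \<bar>Im x\<bar> + v * \<bar>Im y\<bar> < u * (\<delta> * Re x) + v * (\<delta> * Re y)"
  proof (cases "u = 0")
    case True thus ?thesis using s yr by simp
  next
    case False hence "u * \<bar>Im x\<bar> < u * (\<delta> * Re x)" using u xr by simp
    thus ?thesis using a3 by linarith
  qed
  have "\<bar>u * Im x + v * Im y\<bar> < \<delta> * (u * Re x + v * Re y)"
    using a1 a4 by (simp add: algebra_simps)
  thus "u *\<^sub>R x + v *\<^sub>R y \<in> SS" using r1 by (simp add: SS_def)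
qed

lemma cinner_bound: "cmod (cinner v y) \<le> 2 * norm v * norm y"
proof -
  have "cmod (cinner v y) \<le> \<bar>inner v y\<bar> + \<bar>inner v (imul y)\<bar>"
    using cmod_le[of "cinner v y"] by (simp add: Re_cinner Im_cinner)
  also have "\<dots> \<le> norm v * norm y + norm v * norm (imul y)"
    by (intro add_mono Cauchy_Schwarz_ineq2)
  finally show ?thesis by (simp add: norm_imul)
qed

lemma phi_deriv:
  assumes zS: "z \<in> SS"
  shows "\<exists>d. ((\<lambda>w. cinner (F w u) y) has_field_derivative d) (at z)"
proof -
  have zs: "z \<in> sector \<delta>" using zS SS_sector by auto
  then obtain L where bl: "bounded_linear L" and
    lim: "((\<lambda>w. onorm (\<lambda>x. cscale (inverse (w - z)) (F w x - F z x) - L x)) \<longlongrightarrow> 0) (at z)"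
    using Fhol unfolding op_holomorphic_on_def by blast
  define G where "G w = (\<lambda>x. cscale (inverse (w - z)) (F w x - F z x) - L x)" for w
  have evS: "\<forall>\<^sub>F w in at z. w \<in> SS"
    using SS_open zS by (simp add: eventually_at_topological) blast
  have ev: "\<forall>\<^sub>F w in at z. cmod ((cinner (F w u) y - cinner (F z u) y) / (w - z) - cinner (L u) y)
      \<le> 2 * (onorm (G w) * norm u) * norm y"
    using evS eventually_neq_at_within[of z z UNIV]
  proof (eventually_elim)
    case (elim w)
    have ws: "w \<in> sector \<delta>" using elim SS_sector by auto
    have "(cinner (F w u) y - cinner (F z u) y) / (w - z) - cinner (L u) y = cinner (G w u) y"
      by (simp add: G_def cinner_diff_left cinner_cscale_left divide_inverse mult.commute)
    moreover have "bounded_linear (G w)"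
      unfolding G_def
      using Fcl[OF ws] Fcl[OF zs] bl
      by (intro bounded_linear_sub bounded_linear_compose[OF bounded_linear_cscale]) (auto simp: bounded_clinear_def)
    hence "norm (G w u) \<le> onorm (G w) * norm u" by (rule onorm)
    ultimately show ?case
      using cinner_bound[of "G w u" y] mult_right_mono[of "norm (G w u)" "onorm (G w) * norm u" "2 * norm y"]
      by (simp add: algebra_simps)
  qed
  have "((\<lambda>w. 2 * (onorm (G w) * norm u) * norm y) \<longlongrightarrow> 2 * (0 * norm u) * norm y) (at z)"
    using lim unfolding G_def by (intro tendsto_intros)
  hence "((\<lambda>w. (cinner (F w u) y - cinner (F z u) y) / (w - z) - cinner (L u) y) \<longlongrightarrow> 0) (at z)"
    using Lim_null_comparison[OF ev] by simp
  hence "((\<lambda>w. (cinner (F w u) y - cinner (F z u) y) / (w - z)) \<longlongrightarrow> cinner (L u) y) (at z)"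
    by (simp add: LIM_zero_iff)
  thus ?thesis by (auto simp: has_field_derivative_iff)
qed

lemma T_nonzero:
  assumes u0: "u0 \<noteq> 0" and t0: "t0 > 0"
  shows "T t0 u0 \<noteq> 0"
proof
  assume z0: "T t0 u0 = 0"
  have zero: "T s u0 = 0" if "s > t0" for s
  proof -
    have "T s u0 = T (s - t0) (T t0 u0)" using Tadd[of "s - t0" t0 u0] that t0 by simp
    also have "\<dots> = 0" using z0 Tlin_scale[of "s - t0" 0 0] that by simp
    finally show ?thesis .
  qed
  have all0: "T s u0 = 0" if s: "s > 0" for s
  proof -
    have hol: "(\<lambda>w. cinner (F w u0) (T s u0)) holomorphic_on SS"
      using SS_open phi_deriv by (simp add: holomorphic_on_open)
    have "cinner (F (complex_of_real s) u0) (T s u0) = 0"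
    proof (rule analytic_continuation[OF hol SS_open convex_connected[OF SS_convex]])
      show "complex_of_real ` {t0<..} \<subseteq> SS" using t0 dpos by (auto simp: SS_def)
      show "complex_of_real (t0 + 1) \<in> SS" using t0 dpos by (auto simp: SS_def)
      show "complex_of_real s \<in> SS" using s dpos by (auto simp: SS_def)
      show "complex_of_real (t0 + 1) islimpt complex_of_real ` {t0<..}"
        unfolding islimpt_approachable
      proof (intro allI impI)
        fix e :: real assume e: "e > 0"
        show "\<exists>x'\<in>complex_of_real ` {t0<..}. x' \<noteq> complex_of_real (t0 + 1) \<and> dist x' (complex_of_real (t0 + 1)) < e"
        proof (rule bexI[of _ "complex_of_real (t0 + 1 + e/2)"])
        show "complex_of_real (t0 + 1 + e/2) \<in> complex_of_real ` {t0<..}"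
          using e by (intro imageI) simp
        have "dist (complex_of_real (t0 + 1 + e/2)) (complex_of_real (t0 + 1)) = e/2"
          using e by (simp only: dist_of_real) (simp add: dist_real_def)
        thus "complex_of_real (t0 + 1 + e/2) \<noteq> complex_of_real (t0 + 1) \<and>
            dist (complex_of_real (t0 + 1 + e/2)) (complex_of_real (t0 + 1)) < e"
          using e by (simp only: of_real_eq_iff) simp
      qed
      qed
      fix w assume "w \<in> complex_of_real ` {t0<..}"
      then obtain r where r: "r > t0" "w = complex_of_real r" by auto
      have "F w u0 = 0" using zero[OF r(1)] FT[of r] t0 r by simp
      thus "cinner (F w u0) (T s u0) = 0"
        by (simp add: cinner_def complex_eq_iff)
    qed
    hence "inner (T s u0) (T s u0) = 0" using FT[OF s] Re_cinner[of "T s u0" "T s u0"] by simp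
    thus ?thesis by simp
  qed
  have "\<forall>\<^sub>F s in at_right 0. T s u0 = 0"
    using eventually_at_right_less[of "0::real"] by (rule eventually_mono) (simp add: all0)
  hence "((\<lambda>s. T s u0) \<longlongrightarrow> 0) (at_right 0)" by (simp add: tendsto_eventually)
  with Tright[of u0] have "u0 = 0" by (intro tendsto_unique[of "at_right (0::real)"]) auto
  with u0 show False by simp
qed

end

locale sgU = sgH T A D F \<delta>
  for T :: "real \<Rightarrow> 'a::complex_hilbert \<Rightarrow> 'a" and A D F \<delta> +
  fixes u0 :: 'a
  assumes u0nz: "u0 \<noteq> 0"
    and posA: "num_range A D \<subseteq> {z. Re z > 0}"
    and sqA: "num_range (A \<circ> A) (dom_sq A D) \<subseteq> {z. Re z \<ge> 0}"
begin

definition w :: "nat \<Rightarrow> real \<Rightarrow> 'a" where "w n t = (A ^^ n) (T t u0)"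
definition g :: "nat \<Rightarrow> nat \<Rightarrow> real \<Rightarrow> real" where "g i j t = inner (w i t) (w j t)"
definition hh :: "real \<Rightarrow> real" where "hh t = norm (T t u0)"
definition hp :: "real \<Rightarrow> real" where "hp t = - g 1 0 t / hh t"
definition hpp :: "real \<Rightarrow> real" where
  "hpp t = (g 2 0 t + g 1 1 t) / hh t - (g 1 0 t)\<^sup>2 / (hh t)^3"

lemma w0: "w 0 t = T t u0" by (simp add: w_def)
lemma w1: "w 1 t = A (T t u0)" by (simp add: w_def)
lemma w2: "w 2 t = A (A (T t u0))" by (simp add: w_def numeral_2_eq_2)

lemma dw: "t > 0 \<Longrightarrow> (w n has_vector_derivative - w (Suc n) t) (at t)"
  unfolding w_def using dK[of t n u0] by simp

lemma dg: "t > 0 \<Longrightarrow> (g i j has_real_derivative - (g (Suc i) j t + g i (Suc j) t)) (at t)"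
proof -
  assume t: "t > 0"
  have "((\<lambda>t. inner (w i t) (w j t)) has_vector_derivative
      (inner (w i t) (- w (Suc j) t) + inner (- w (Suc i) t) (w j t))) (at t)"
    using bounded_bilinear.has_vector_derivative[OF bounded_bilinear_inner dw[OF t] dw[OF t]] .
  thus ?thesis
    unfolding has_real_derivative_iff_has_vector_derivative g_def
    by (simp add: algebra_simps)
qed

lemma hh_pos: "t \<ge> 0 \<Longrightarrow> hh t > 0"
  using T_nonzero[OF u0nz, of t] u0nz by (cases "t = 0") (auto simp: hh_def T0)

lemma hh_sqrt: "hh t = sqrt (g 0 0 t)"
  by (simp add: hh_def g_def w0 norm_eq_sqrt_inner)

lemma g00_pos: "t \<ge> 0 \<Longrightarrow> g 0 0 t > 0"
  using hh_pos[of t] by (simp add: hh_sqrt)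

lemma g_sym: "g i j t = g j i t" by (simp add: g_def inner_commute)

lemma dhh: "t > 0 \<Longrightarrow> (hh has_real_derivative hp t) (at t)"
proof -
  assume t: "t > 0"
  have "((\<lambda>t. sqrt (g 0 0 t)) has_real_derivative inverse (sqrt (g 0 0 t)) / 2 * (- (g 1 0 t + g 0 1 t))) (at t)"
    using DERIV_chain'[OF dg[OF t] DERIV_real_sqrt[OF g00_pos]] t by simp
  moreover have "inverse (sqrt (g 0 0 t)) / 2 * (- (g 1 0 t + g 0 1 t)) = hp t"
    using g_sym[of 0 1 t] by (simp add: hp_def hh_sqrt field_simps)
  ultimately show ?thesis by (simp add: hh_sqrt[abs_def])
qed

lemma dhd: "t > 0 \<Longrightarrow> (hp has_real_derivative hpp t) (at t)"
proof -
  assume t: "t > 0"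
  have d1: "((\<lambda>t. - g 1 0 t) has_real_derivative (g 2 0 t + g 1 1 t)) (at t)"
    using DERIV_minus[OF dg[OF t, of 1 0]] by (simp add: numeral_2_eq_2 add.commute)
  have "((\<lambda>t. - g 1 0 t / hh t) has_real_derivative
     ((g 2 0 t + g 1 1 t) * hh t - (- g 1 0 t) * hp t) / (hh t * hh t)) (at t)"
    using DERIV_divide[OF d1 dhh[OF t]] hh_pos[of t] t by simp
  moreover have "((g 2 0 t + g 1 1 t) * hh t - (- g 1 0 t) * hp t) / (hh t * hh t) = hpp t"
    using hh_pos[of t] t by (simp add: hp_def hpp_def field_simps power2_eq_square power3_eq_cube)
  ultimately show ?thesis by (simp add: hp_def[abs_def])
qed

end

context sgU
begin

lemma w1': "w (Suc 0) t = A (T t u0)" by (simp add: w_def)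

lemma div_pos_back: "(0::real) < c \<Longrightarrow> 0 < X / c \<Longrightarrow> 0 < X"
  by (simp add: zero_less_divide_iff)

lemma div_nonneg_back: "(0::real) < c \<Longrightarrow> 0 \<le> X / c \<Longrightarrow> 0 \<le> X"
  by (simp add: zero_le_divide_iff)

lemma normalize:
  assumes v: "v \<in> D" "v \<noteq> 0"
  shows "(1 / norm v) *\<^sub>R v \<in> D" "norm ((1 / norm v) *\<^sub>R v) = 1" "A ((1 / norm v) *\<^sub>R v) = (1 / norm v) *\<^sub>R A v"
  using Dscale[OF v(1), of "1 / norm v"] v by auto

lemma inner_pos: assumes v: "v \<in> D" "v \<noteq> 0" shows "inner (A v) v > 0"
proof -
  note x = normalize[OF v]
  have "cinner (A ((1 / norm v) *\<^sub>R v)) ((1 / norm v) *\<^sub>R v) \<in> num_range A D"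
    unfolding num_range_def using x(1,2) by blast
  hence "Re (cinner (A ((1 / norm v) *\<^sub>R v)) ((1 / norm v) *\<^sub>R v)) > 0" using posA by auto
  hence "inner ((1 / norm v) *\<^sub>R A v) ((1 / norm v) *\<^sub>R v) > 0" by (simp only: Re_cinner x(3))
  hence "(1 / norm v) * ((1 / norm v) * inner (A v) v) > 0" by (simp only: inner_scaleR_left inner_scaleR_right)
  hence "inner (A v) v / (norm v * norm v) > 0" by simp
  moreover have "norm v * norm v > 0" using v by (simp add: mult_pos_pos)
  ultimately show ?thesis using div_pos_back by blast
qed

lemma inner_m: assumes v: "v \<in> D" "v \<noteq> 0" shows "inner (A v) v \<ge> m_of A D * (norm v)\<^sup>2"
proof -
  note x = normalize[OF v]
  have mem: "cinner (A ((1 / norm v) *\<^sub>R v)) ((1 / norm v) *\<^sub>R v) \<in> num_range A D"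
    unfolding num_range_def using x(1,2) by blast
  have "bdd_below (Re ` num_range A D)"
    using posA by (intro bdd_belowI[of _ 0]) (auto intro: less_imp_le)
  hence "m_of A D \<le> Re (cinner (A ((1 / norm v) *\<^sub>R v)) ((1 / norm v) *\<^sub>R v))"
    unfolding m_of_def using mem by (intro cInf_lower) (rule imageI)
  hence "m_of A D \<le> inner ((1 / norm v) *\<^sub>R A v) ((1 / norm v) *\<^sub>R v)" by (simp only: Re_cinner x(3))
  hence "m_of A D \<le> (1 / norm v) * ((1 / norm v) * inner (A v) v)" by (simp only: inner_scaleR_left inner_scaleR_right)
  hence "m_of A D \<le> inner (A v) v / (norm v)\<^sup>2" by (simp add: power2_eq_square)
  moreover have "(norm v)\<^sup>2 > 0" using v by simp
  ultimately show ?thesis by (simp add: pos_le_divide_eq)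
qed

lemma inner_sq: assumes v: "v \<in> D" "v \<noteq> 0" "A v \<in> D" shows "inner (A (A v)) v \<ge> 0"
proof -
  note x = normalize[OF v(1,2)]
  note y = Dscale[OF v(3), of "1 / norm v"]
  have AAx: "A (A ((1 / norm v) *\<^sub>R v)) = (1 / norm v) *\<^sub>R A (A v)"
    by (simp only: x(3) y)
  have "(1 / norm v) *\<^sub>R v \<in> dom_sq A D" unfolding dom_sq_def using x(1) y x(3) by simp
  hence "cinner ((A \<circ> A) ((1 / norm v) *\<^sub>R v)) ((1 / norm v) *\<^sub>R v) \<in> num_range (A \<circ> A) (dom_sq A D)"
    unfolding num_range_def using x(2) by blast
  hence "Re (cinner ((A \<circ> A) ((1 / norm v) *\<^sub>R v)) ((1 / norm v) *\<^sub>R v)) \<ge> 0" using sqA by auto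
  hence "inner ((1 / norm v) *\<^sub>R A (A v)) ((1 / norm v) *\<^sub>R v) \<ge> 0" by (simp only: Re_cinner comp_apply AAx)
  hence "(1 / norm v) * ((1 / norm v) * inner (A (A v)) v) \<ge> 0" by (simp only: inner_scaleR_left inner_scaleR_right)
  hence "inner (A (A v)) v / (norm v * norm v) \<ge> 0" by simp
  moreover have "norm v * norm v > 0" using v by (simp add: mult_pos_pos)
  ultimately show ?thesis using div_nonneg_back by blast
qed

lemma wD: "t > 0 \<Longrightarrow> w n t \<in> D"
  using K[of t 0 n u0] by (simp add: w_def)

lemma g10_pos: "t > 0 \<Longrightarrow> g 1 0 t > 0"
  using inner_pos[of "T t u0"] wD[of t 0] T_nonzero[OF u0nz, of t] by (simp add: g_def w0 w1 w1')

lemma hp_neg: "t > 0 \<Longrightarrow> hp t < 0"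
  using g10_pos[of t] hh_pos[of t] by (simp add: hp_def)

lemma hp_m: "t > 0 \<Longrightarrow> hp t \<le> - m_of A D * hh t"
proof -
  assume t: "t > 0"
  have "g 1 0 t \<ge> m_of A D * (hh t)\<^sup>2"
    using inner_m[of "T t u0"] wD[of t 0] T_nonzero[OF u0nz, of t] t by (simp add: g_def w0 w1 w1' hh_def)
  hence "g 1 0 t / hh t \<ge> m_of A D * (hh t)\<^sup>2 / hh t"
    using hh_pos[of t] t by (simp add: divide_right_mono)
  thus ?thesis using hh_pos[of t] t by (simp add: hp_def power2_eq_square)
qed

lemma key_ineq:
  fixes P Q R n :: real
  assumes n: "n > 0" and k: "(P + Q) * n\<^sup>2 - R\<^sup>2 > 0"
  shows "(P + Q) / n - R\<^sup>2 / n^3 > 0"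
proof -
  have "(P + Q) / n = ((P + Q) * n\<^sup>2) / n^3" using n by (simp add: power2_eq_square power3_eq_cube)
  hence "(P + Q) / n - R\<^sup>2 / n^3 = ((P + Q) * n\<^sup>2 - R\<^sup>2) / n^3" by (simp add: diff_divide_distrib)
  thus ?thesis using k n by simp
qed

lemma hpp_pos: assumes t: "t > 0" shows "hpp t > 0"
proof -
  define v where "v = T t u0"
  define a where "a = A v"
  have vD: "v \<in> D" and vnz: "v \<noteq> 0" and aD: "a \<in> D"
    using wD[of t 0] wD[of t 1] T_nonzero[OF u0nz, of t] t by (auto simp: v_def a_def w0 w1 w1')
  have g20: "g 2 0 t = inner (A a) v" and g11: "g 1 1 t = inner a a" and g10: "g 1 0 t = inner a v"
    by (simp_all add: g_def w0 w1 w1' w2 v_def a_def)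
  have hh: "hh t = norm v" by (simp add: hh_def v_def)
  have nv: "norm v > 0" using vnz by simp
  have g20p: "inner (A a) v \<ge> 0" using inner_sq[OF vD vnz] aD by (simp add: a_def)
  have g10p: "inner a v > 0" using inner_pos[OF vD vnz] by (simp add: a_def)
  have key: "(inner (A a) v + inner a a) * (norm v)\<^sup>2 - (inner a v)\<^sup>2 > 0"
  proof (cases "\<bar>inner a v\<bar> = norm a * norm v")
    case True
    then have "norm a *\<^sub>R v = norm v *\<^sub>R a \<or> norm a *\<^sub>R v = - norm v *\<^sub>R a"
      by (simp add: norm_cauchy_schwarz_abs_eq)
    then obtain l where al: "a = l *\<^sub>R v"
    proof
      assume e: "norm a *\<^sub>R v = norm v *\<^sub>R a"
      have "a = (1 / norm v) *\<^sub>R (norm v *\<^sub>R a)" using nv by simp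
      also have "\<dots> = (1 / norm v) *\<^sub>R (norm a *\<^sub>R v)" using e by simp
      finally have "a = (norm a / norm v) *\<^sub>R v" by simp
      thus ?thesis using that by blast
    next
      assume e: "norm a *\<^sub>R v = - norm v *\<^sub>R a"
      have "a = (- 1 / norm v) *\<^sub>R (- norm v *\<^sub>R a)" using nv by simp
      also have "\<dots> = (- 1 / norm v) *\<^sub>R (norm a *\<^sub>R v)" using e by simp
      finally have "a = (- norm a / norm v) *\<^sub>R v" by simp
      thus ?thesis using that by blast
    qed
    have Aa: "A a = l *\<^sub>R a" using Dscale[OF vD, of l] al by (simp add: a_def)
    have i1: "inner a v = l * (norm v)\<^sup>2" using al by (simp add: power2_norm_eq_inner)
    have i2: "inner (A a) v = l * l * (norm v)\<^sup>2" using Aa al by (simp add: power2_norm_eq_inner)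
    have i3: "inner a a = l * l * (norm v)\<^sup>2" using al by (simp add: power2_norm_eq_inner)
    have "l \<noteq> 0" using g10p i1 by auto
    hence "l * l > 0" by (metis not_real_square_gt_zero)
    moreover have "(norm v)\<^sup>2 * (norm v)\<^sup>2 > 0" using nv by (simp only: mult_pos_pos zero_less_power)
    ultimately have pos: "l * l * ((norm v)\<^sup>2 * (norm v)\<^sup>2) > 0" by (rule mult_pos_pos)
    have "(inner (A a) v + inner a a) * (norm v)\<^sup>2 - (inner a v)\<^sup>2 = l * l * ((norm v)\<^sup>2 * (norm v)\<^sup>2)"
      unfolding i1 i2 i3 by (simp add: power2_eq_square)
    thus ?thesis using pos by simp
  next
    case False
    hence "\<bar>inner a v\<bar> < norm a * norm v" using Cauchy_Schwarz_ineq2[of a v] by simp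
    hence "\<bar>inner a v\<bar>\<^sup>2 < (norm a * norm v)\<^sup>2"
      by (intro power_strict_mono) auto
    hence "(inner a v)\<^sup>2 < inner a a * (norm v)\<^sup>2" by (simp add: power_mult_distrib power2_norm_eq_inner)
    moreover have "inner (A a) v * (norm v)\<^sup>2 \<ge> 0" using g20p by simp
    ultimately show ?thesis by (simp add: distrib_right)
  qed
  have "hpp t = (inner (A a) v + inner a a) / norm v - (inner a v)\<^sup>2 / (norm v)^3"
    by (simp only: hpp_def g20 g11 g10 hh)
  thus ?thesis using key_ineq[OF nv key] by simp
qed

end

lemma mvt_at:
  fixes f :: "real \<Rightarrow> real"
  assumes ab: "a < b" and c: "continuous_on {a..b} f"
    and d: "\<And>x. a < x \<Longrightarrow> x < b \<Longrightarrow> (f has_real_derivative f' x) (at x)"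
  shows "\<exists>z. a < z \<and> z < b \<and> f b - f a = (b - a) * f' z"
proof -
  obtain l z where "a < z" "z < b" "DERIV f z :> l" "f b - f a = (b - a) * l"
    using MVT[OF ab c] d by (meson real_differentiable_def)
  moreover have "l = f' z" using DERIV_unique[OF \<open>DERIV f z :> l\<close> d[OF \<open>a < z\<close> \<open>z < b\<close>]] .
  ultimately show ?thesis by blast
qed

lemma incr_from_deriv:
  fixes f' f'' :: "real \<Rightarrow> real"
  assumes d: "\<And>t. t > 0 \<Longrightarrow> (f' has_real_derivative f'' t) (at t)"
    and p: "\<And>t. t > 0 \<Longrightarrow> f'' t > 0"
    and ab: "0 < a" "a < b"
  shows "f' a < f' b"
proof (rule DERIV_pos_imp_increasing[OF ab(2)])
  fix x assume "a \<le> x" "x \<le> b"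
  hence x: "x > 0" using ab by linarith
  show "\<exists>y. (f' has_real_derivative y) (at x) \<and> 0 < y" using d[OF x] p[OF x] by blast
qed

lemma strict_convex_from_deriv:
  fixes f f' :: "real \<Rightarrow> real"
  assumes c: "continuous_on {0..} f"
    and d: "\<And>t. t > 0 \<Longrightarrow> (f has_real_derivative f' t) (at t)"
    and inc: "\<And>a b. 0 < a \<Longrightarrow> a < b \<Longrightarrow> f' a < f' b"
  shows "strict_convex_on {0..} f"
proof -
  have core: "f ((1 - u) * x + u * y) < (1 - u) * f x + u * f y"
    if xy: "0 \<le> x" "x < y" and u: "0 < u" "u < 1" for x y u :: real
  proof -
    define z where "z = (1 - u) * x + u * y"
    have zx: "z - x = u * (y - x)" and yz: "y - z = (1 - u) * (y - x)" by (simp_all add: z_def algebra_simps)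
    have "0 < u * (y - x)" using u xy by (intro mult_pos_pos) auto
    hence xz: "x < z" using zx by linarith
    have "0 < (1 - u) * (y - x)" using u xy by (intro mult_pos_pos) auto
    hence zy: "z < y" using yz by linarith
    have c1: "continuous_on {x..z} f" using xy by (intro continuous_on_subset[OF c]) auto
    have c2: "continuous_on {z..y} f" using c xy xz by (intro continuous_on_subset[OF c]) auto
    obtain z1 where z1: "x < z1" "z1 < z" "f z - f x = (z - x) * f' z1"
      using mvt_at[OF xz c1, of f'] d xy by force
    obtain z2 where z2: "z < z2" "z2 < y" "f y - f z = (y - z) * f' z2"
      using mvt_at[OF zy c2, of f'] d xy xz by force
    have lt: "f' z1 < f' z2" using inc[of z1 z2] z1 z2 xy by linarith
    have yx: "y - x > 0" using xy by simp
    have "(1 - u) * (f z - f x) = (1 - u) * u * (y - x) * f' z1" using z1(3) zx by simp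
    also have "\<dots> < (1 - u) * u * (y - x) * f' z2"
      using lt u yx by (simp add: mult_pos_pos)
    also have "\<dots> = u * (f y - f z)" using z2(3) yz by simp
    finally have "(1 - u) * (f z - f x) < u * (f y - f z)" .
    hence "f z < (1 - u) * f x + u * f y" by (simp add: algebra_simps)
    thus ?thesis by (simp only: z_def)
  qed
  show ?thesis unfolding strict_convex_on_def
  proof (intro ballI impI allI)
    fix x y u :: real assume x: "x \<in> {0..}" and y: "y \<in> {0..}" and ne: "x \<noteq> y" and u: "0 < u \<and> u < 1"
    show "f ((1 - u) * x + u * y) < (1 - u) * f x + u * f y"
    proof (cases "x < y")
      case True thus ?thesis using core[of x y u] x u by auto
    next
      case False
      hence "y < x" using ne by auto
      hence "f ((1 - (1 - u)) * y + (1 - u) * x) < (1 - (1 - u)) * f y + (1 - u) * f x"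
        using core[of y x "1 - u"] y u by auto
      thus ?thesis by (simp add: algebra_simps)
    qed
  qed
qed

lemma strict_antimono_from_deriv:
  fixes f f' :: "real \<Rightarrow> real"
  assumes c: "continuous_on {0..} f"
    and d: "\<And>t. t > 0 \<Longrightarrow> (f has_real_derivative f' t) (at t)"
    and n: "\<And>t. t > 0 \<Longrightarrow> f' t < 0"
  shows "strict_antimono_on {0..} f"
proof (rule monotone_onI)
  fix a b :: real assume a: "a \<in> {0..}" and b: "b \<in> {0..}" and ab: "a < b"
  have c1: "continuous_on {a..b} f" using a by (intro continuous_on_subset[OF c]) auto
  obtain z where z: "a < z" "z < b" "f b - f a = (b - a) * f' z"
    using mvt_at[OF ab c1, of f'] d a by force
  have "(b - a) * f' z < 0" using n[of z] z a ab by (simp add: mult_pos_neg)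
  thus "f b < f a" using z by simp
qed

lemma limit_INF:
  fixes f f' :: "real \<Rightarrow> real"
  assumes c: "continuous_on {0..} f"
    and d: "\<And>t. t > 0 \<Longrightarrow> (f has_real_derivative f' t) (at t)"
    and inc: "\<And>a b. 0 < a \<Longrightarrow> a < b \<Longrightarrow> f' a < f' b"
  shows "((\<lambda>t. ereal (f' t)) \<longlongrightarrow> (INF t\<in>{0<..}. ereal (f' t))) (at_right 0)"
    and "((\<lambda>s. ereal ((f s - f 0) / s)) \<longlongrightarrow> (INF t\<in>{0<..}. ereal (f' t))) (at_right 0)"
proof -
  define dd where "dd = (INF t\<in>{0<..}. ereal (f' t))"
  have low: "dd \<le> ereal (f' t)" if "t > 0" for t
    unfolding dd_def using that by (intro INF_lower) auto
  show lim1: "((\<lambda>t. ereal (f' t)) \<longlongrightarrow> dd) (at_right 0)"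
  proof (rule order_tendstoI)
    fix a assume "a < dd"
    show "\<forall>\<^sub>F t in at_right 0. a < ereal (f' t)"
      using eventually_at_right_less[of "0::real"]
      by (rule eventually_mono) (use low \<open>a < dd\<close> in \<open>auto intro: less_le_trans\<close>)
  next
    fix a assume "dd < a"
    then obtain t0 where t0: "t0 > 0" "ereal (f' t0) < a"
      unfolding dd_def INF_less_iff by auto
    show "\<forall>\<^sub>F t in at_right 0. ereal (f' t) < a"
      unfolding eventually_at_right_field
    proof (intro exI[of _ t0] conjI allI impI)
      show "0 < t0" by fact
      fix t :: real assume "0 < t" "t < t0"
      hence "f' t < f' t0" using inc by auto
      hence "ereal (f' t) < ereal (f' t0)" by simp
      thus "ereal (f' t) < a" using t0(2) by (rule less_trans)
    qed
  qed
  have ev1: "\<forall>\<^sub>F s in at_right 0. dd \<le> ereal ((f s - f 0) / s) \<and> ereal ((f s - f 0) / s) \<le> ereal (f' s)"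
    using eventually_at_right_less[of "0::real"]
  proof (rule eventually_mono)
    fix s :: real assume s: "0 < s"
    have c1: "continuous_on {0..s} f" by (intro continuous_on_subset[OF c]) auto
    obtain z where z: "0 < z" "z < s" "f s - f 0 = (s - 0) * f' z"
      using mvt_at[OF s c1, of f'] d by force
    have q: "(f s - f 0) / s = f' z" using z s by simp
    show "dd \<le> ereal ((f s - f 0) / s) \<and> ereal ((f s - f 0) / s) \<le> ereal (f' s)"
      using q low[OF z(1)] inc[OF z(1) z(2)] by simp
  qed
  show "((\<lambda>s. ereal ((f s - f 0) / s)) \<longlongrightarrow> dd) (at_right 0)"
    by (rule tendsto_sandwich[OF _ _ tendsto_const lim1]) (use ev1 in \<open>auto elim: eventually_mono\<close>)
qed

context sgU
begin

lemma hh_cont: "continuous_on {0..} hh"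
  unfolding hh_def[abs_def] by (intro continuous_on_norm Tcont)

lemma hh_right: "(hh \<longlongrightarrow> norm u0) (at_right 0)"
  unfolding hh_def[abs_def] by (intro tendsto_norm Tright)

definition fp :: "real \<Rightarrow> real" where "fp t = - inner (T t (A u0)) (T t u0) / hh t"

lemma du_within:
  assumes u0D: "u0 \<in> D" and t: "t \<ge> 0"
  shows "((\<lambda>s. T s u0) has_vector_derivative - T t (A u0)) (at t within {0..})"
proof (cases "t = 0")
  case True
  have "((\<lambda>y. (1 / y) *\<^sub>R (T y u0 - u0)) \<longlongrightarrow> - A u0) (at_right 0)" by (rule Dlim[OF u0D])
  thus ?thesis using True by (simp add: vderiv_iff at_within_Ici_at_right T0)
next
  case False
  hence tp: "t > 0" using t by simp
  have "((\<lambda>r. (A ^^ 0) (T r u0)) has_vector_derivative - (A ^^ Suc 0) (T t u0)) (at t)"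
    by (rule dK[OF tp])
  hence "((\<lambda>s. T s u0) has_vector_derivative - T t (A u0)) (at t)"
    using comm[OF u0D t] by simp
  thus ?thesis by (rule has_vector_derivative_at_within)
qed

lemma dhh_within:
  assumes u0D: "u0 \<in> D" and t: "t \<ge> 0"
  shows "(hh has_real_derivative fp t) (at t within {0..})"
proof -
  have "((\<lambda>s. inner (T s u0) (T s u0)) has_vector_derivative
      (inner (T t u0) (- T t (A u0)) + inner (- T t (A u0)) (T t u0))) (at t within {0..})"
    using bounded_bilinear.has_vector_derivative[OF bounded_bilinear_inner du_within[OF u0D t] du_within[OF u0D t]] .
  hence dq: "((\<lambda>s. inner (T s u0) (T s u0)) has_real_derivative (- 2 * inner (T t (A u0)) (T t u0))) (at t within {0..})"
    unfolding has_real_derivative_iff_has_vector_derivative by (simp add: inner_commute)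
  have pos: "0 < inner (T t u0) (T t u0)" using hh_pos[OF t] by (simp add: hh_def)
  have d1: "((\<lambda>s. sqrt (inner (T s u0) (T s u0))) has_real_derivative
      inverse (sqrt (inner (T t u0) (T t u0))) / 2 * (- 2 * inner (T t (A u0)) (T t u0))) (at t within {0..})"
    by (rule DERIV_chain'[OF dq DERIV_real_sqrt[OF pos]])
  have hq: "hh = (\<lambda>s. sqrt (inner (T s u0) (T s u0)))" by (rule ext) (simp only: hh_def norm_eq_sqrt_inner)
  have "(hh has_real_derivative inverse (hh t) / 2 * (- 2 * inner (T t (A u0)) (T t u0))) (at t within {0..})"
    using d1 by (simp only: hq)
  moreover have "inverse (hh t) / 2 * (- 2 * inner (T t (A u0)) (T t u0)) = fp t"
    by (simp add: fp_def field_simps)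
  ultimately show ?thesis by simp
qed

lemma fp_cont: "continuous_on {0..} fp"
  unfolding fp_def[abs_def]
  using hh_pos hh_cont
  by (intro continuous_intros Tcont) (auto simp: hh_def)

lemma fp_hp: "u0 \<in> D \<Longrightarrow> t > 0 \<Longrightarrow> fp t = hp t"
  using comm[of u0 t] by (simp add: fp_def hp_def g_def w0 w1')

lemma C1: "u0 \<in> D \<Longrightarrow> C1_on {0..} hh"
  unfolding C1_on_def using dhh_within fp_cont by blast

lemma quot0: "u0 \<in> D \<Longrightarrow> ((\<lambda>s. (hh s - hh 0) / s) \<longlongrightarrow> fp 0) (at_right 0)"
  using dhh_within[of 0] by (simp add: has_field_derivative_iff at_within_Ici_at_right)

inductive_set Sm :: "(real \<Rightarrow> real) set" where
  Sg: "g i j \<in> Sm"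
| Spow: "(\<lambda>t. g 0 0 t powr r) \<in> Sm"
| Sconst: "(\<lambda>t. c) \<in> Sm"
| Sadd: "f1 \<in> Sm \<Longrightarrow> f2 \<in> Sm \<Longrightarrow> (\<lambda>t. f1 t + f2 t) \<in> Sm"
| Smul: "f1 \<in> Sm \<Longrightarrow> f2 \<in> Sm \<Longrightarrow> (\<lambda>t. f1 t * f2 t) \<in> Sm"

lemma Sm_deriv: "f \<in> Sm \<Longrightarrow> \<exists>f'\<in>Sm. \<forall>t>0. (f has_real_derivative f' t) (at t)"
proof (induction rule: Sm.induct)
  case (Sg i j)
  show ?case
  proof (rule bexI[of _ "\<lambda>t. (- 1) * (g (Suc i) j t + g i (Suc j) t)"])
    show "(\<lambda>t. (- 1) * (g (Suc i) j t + g i (Suc j) t)) \<in> Sm"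
      by (intro Sm.intros)
    show "\<forall>t>0. (g i j has_real_derivative - 1 * (g (Suc i) j t + g i (Suc j) t)) (at t)"
      using dg by simp
  qed
next
  case (Spow r)
  show ?case
  proof (rule bexI[of _ "\<lambda>t. (r * g 0 0 t powr (r - 1)) * ((- 1) * (g 1 0 t + g 0 1 t))"])
    show "(\<lambda>t. (r * g 0 0 t powr (r - 1)) * ((- 1) * (g 1 0 t + g 0 1 t))) \<in> Sm"
      by (intro Sm.intros)
    show "\<forall>t>0. ((\<lambda>t. g 0 0 t powr r) has_real_derivative (r * g 0 0 t powr (r - 1)) * ((- 1) * (g 1 0 t + g 0 1 t))) (at t)"
    proof (intro allI impI)
      fix t :: real assume t: "t > 0"
      show "((\<lambda>t. g 0 0 t powr r) has_real_derivative (r * g 0 0 t powr (r - 1)) * ((- 1) * (g 1 0 t + g 0 1 t))) (at t)"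
        using DERIV_fun_powr[OF dg[OF t, of 0 0] g00_pos[of t], of r] t by simp
    qed
  qed
next
  case (Sconst c)
  show ?case by (rule bexI[of _ "\<lambda>t. 0"]) (auto intro: Sm.intros)
next
  case (Sadd f1 f2)
  then obtain f1' f2' where "f1' \<in> Sm" "f2' \<in> Sm" "\<forall>t>0. (f1 has_real_derivative f1' t) (at t)"
    "\<forall>t>0. (f2 has_real_derivative f2' t) (at t)" by blast
  thus ?case by (intro bexI[of _ "\<lambda>t. f1' t + f2' t"]) (auto intro: Sm.intros DERIV_add)
next
  case (Smul f1 f2)
  then obtain f1' f2' where s: "f1' \<in> Sm" "f2' \<in> Sm" "f1 \<in> Sm" "f2 \<in> Sm"
    and d: "\<forall>t>0. (f1 has_real_derivative f1' t) (at t)" "\<forall>t>0. (f2 has_real_derivative f2' t) (at t)"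
    by blast
  show ?case
  proof (rule bexI[of _ "\<lambda>t. f1' t * f2 t + f2' t * f1 t"])
    show "(\<lambda>t. f1' t * f2 t + f2' t * f1 t) \<in> Sm" using s by (intro Sm.intros)
    show "\<forall>t>0. ((\<lambda>t. f1 t * f2 t) has_real_derivative f1' t * f2 t + f2' t * f1 t) (at t)"
      using d by (auto intro: DERIV_mult)
  qed
qed

definition Dn :: "nat \<Rightarrow> real \<Rightarrow> real" where
  "Dn = rec_nat (\<lambda>t. g 0 0 t powr (1/2)) (\<lambda>_ f. SOME f'. f' \<in> Sm \<and> (\<forall>t>0. (f has_real_derivative f' t) (at t)))"

lemma Dn_Sm: "Dn n \<in> Sm"
proof (induction n)
  case 0 thus ?case by (simp add: Dn_def Sm.intros)
next
  case (Suc n)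
  have "\<exists>f'. f' \<in> Sm \<and> (\<forall>t>0. (Dn n has_real_derivative f' t) (at t))" using Sm_deriv[OF Suc] by blast
  from someI_ex[OF this] show ?case by (simp add: Dn_def)
qed

lemma Dn_deriv: "t > 0 \<Longrightarrow> (Dn n has_real_derivative Dn (Suc n) t) (at t)"
proof -
  assume t: "t > 0"
  have "\<exists>f'. f' \<in> Sm \<and> (\<forall>t>0. (Dn n has_real_derivative f' t) (at t))" using Sm_deriv[OF Dn_Sm] by blast
  from someI_ex[OF this] have "\<forall>t>0. (Dn n has_real_derivative Dn (Suc n) t) (at t)" by (simp add: Dn_def)
  thus ?thesis using t by blast
qed

lemma Cinf: "Cinf_on {0<..} hh"
  unfolding Cinf_on_def
proof (intro exI[of _ Dn] conjI ballI allI)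
  fix t :: real assume "t \<in> {0<..}"
  hence "g 0 0 t \<ge> 0" using g00_pos[of t] by simp
  thus "Dn 0 t = hh t" by (simp add: Dn_def hh_sqrt powr_half_sqrt)
next
  fix n and t :: real assume "t \<in> {0<..}"
  thus "(Dn n has_real_derivative Dn (Suc n) t) (at t within {0<..})"
    using Dn_deriv[of t n] by (simp add: has_field_derivative_at_within)
qed

end

theorem proposition3p1:
  fixes T :: "real \<Rightarrow> 'a::complex_hilbert \<Rightarrow> 'a"
    and A :: "'a \<Rightarrow> 'a" and D :: "'a set" and u0 :: 'a
  assumes "C0_semigroup T"
    and "neg_generator T A D"
    and "uniformly_bounded_sg T"
    and "holomorphic_sg T"
    and "num_range A D \<subseteq> {z. Re z > 0}"
    and "num_range (A \<circ> A) (dom_sq A D) \<subseteq> {z. Re z \<ge> 0}"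
    and "u0 \<noteq> 0"
  defines "h \<equiv> (\<lambda>t. norm (T t u0))"
  shows "strict_convex_on {0..} h
    \<and> strict_antimono_on {0..} h
    \<and> (\<forall>t>0. (h has_real_derivative deriv h t) (at t)
          \<and> (deriv h has_real_derivative deriv (deriv h) t) (at t)
          \<and> deriv (deriv h) t > 0)
    \<and> (\<exists>d::ereal. d \<le> 0
          \<and> ((\<lambda>s. ereal ((h s - h 0) / s)) \<longlongrightarrow> d) (at_right 0)
          \<and> d = (INF t\<in>{0<..}. ereal (deriv h t))
          \<and> (norm u0 = 1 \<longrightarrow> d \<le> ereal (- m_of A D))
          \<and> (u0 \<in> D \<and> norm u0 = 1 \<longrightarrow> d = ereal (- Re (cinner (A u0) u0))))
    \<and> (u0 \<in> D \<and> norm u0 = 1 \<longrightarrow> C1_on {0..} h \<and> Cinf_on {0<..} h)"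
proof -
  from assms(4) obtain \<delta> F where dpos: "\<delta> > 0" and FT: "\<forall>t>0. F (complex_of_real t) = T t"
    and Fcl: "\<forall>z\<in>sector \<delta>. bounded_clinear (F z)" and Fhol: "op_holomorphic_on F (sector \<delta>)"
    unfolding holomorphic_sg_def by blast
  interpret U: sgU T A D F \<delta> u0
    by unfold_locales (use assms dpos FT Fcl Fhol in auto)
  have hU: "h = U.hh" by (simp add: h_def U.hh_def[abs_def])
  have dh: "\<And>t. t > 0 \<Longrightarrow> (h has_real_derivative U.hp t) (at t)" using U.dhh hU by simp
  have deq: "\<And>t. t > 0 \<Longrightarrow> deriv h t = U.hp t" using dh by (simp add: DERIV_imp_deriv)
  have ddh: "(deriv h has_real_derivative U.hpp t) (at t)" if t: "t > 0" for t
  proof (rule has_field_derivative_transform_within_open[OF U.dhd[OF t], of "{0<..}"])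
    show "open {0::real<..}" by simp
    show "t \<in> {0<..}" using t by simp
    fix x :: real assume "x \<in> {0<..}"
    thus "U.hp x = deriv h x" using deq[of x] by simp
  qed
  have dd: "\<And>t. t > 0 \<Longrightarrow> deriv (deriv h) t = U.hpp t" using ddh by (simp add: DERIV_imp_deriv)
  have inc: "\<And>a b. 0 < a \<Longrightarrow> a < b \<Longrightarrow> U.hp a < U.hp b"
    by (rule incr_from_deriv[OF U.dhd U.hpp_pos]) auto
  have P1: "strict_convex_on {0..} h"
    unfolding hU by (rule strict_convex_from_deriv[OF U.hh_cont U.dhh inc])
  have P2: "strict_antimono_on {0..} h"
    unfolding hU by (rule strict_antimono_from_deriv[OF U.hh_cont U.dhh U.hp_neg])
  have P3: "\<forall>t>0. (h has_real_derivative deriv h t) (at t)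
          \<and> (deriv h has_real_derivative deriv (deriv h) t) (at t)
          \<and> deriv (deriv h) t > 0"
    using dh deq ddh dd U.hpp_pos by simp
  define d where "d = (INF t\<in>{0<..}. ereal (U.hp t))"
  have lim: "((\<lambda>s. ereal ((h s - h 0) / s)) \<longlongrightarrow> d) (at_right 0)"
    unfolding hU d_def by (rule limit_INF(2)[OF U.hh_cont U.dhh inc])
  have low: "\<And>t. t > 0 \<Longrightarrow> d \<le> ereal (U.hp t)" unfolding d_def by (intro INF_lower) auto
  have d0: "d \<le> 0"
  proof -
    have "d \<le> ereal (U.hp 1)" by (rule low) simp
    also have "\<dots> \<le> 0" using U.hp_neg[of 1] by simp
    finally show ?thesis .
  qed
  have dINF: "d = (INF t\<in>{0<..}. ereal (deriv h t))"
    unfolding d_def by (rule INF_cong) (simp_all add: deq)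
  have dm: "norm u0 = 1 \<longrightarrow> d \<le> ereal (- m_of A D)"
  proof
    assume n1: "norm u0 = 1"
    have "((\<lambda>t. ereal (- m_of A D * U.hh t)) \<longlongrightarrow> ereal (- m_of A D * norm u0)) (at_right 0)"
      unfolding lim_ereal by (intro tendsto_intros U.hh_right)
    moreover have "\<forall>\<^sub>F t in at_right 0. d \<le> ereal (- m_of A D * U.hh t)"
      using eventually_at_right_less[of "0::real"]
    proof (rule eventually_mono)
      fix t :: real assume t: "0 < t"
      have "d \<le> ereal (U.hp t)" using low[OF t] .
      also have "\<dots> \<le> ereal (- m_of A D * U.hh t)" using U.hp_m[OF t] by simp
      finally show "d \<le> ereal (- m_of A D * U.hh t)" .
    qed
    ultimately have "d \<le> ereal (- m_of A D * norm u0)"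
      by (intro tendsto_le[OF trivial_limit_at_right_real _ tendsto_const]) auto
    thus "d \<le> ereal (- m_of A D)" using n1 by simp
  qed
  have dD: "u0 \<in> D \<and> norm u0 = 1 \<longrightarrow> d = ereal (- Re (cinner (A u0) u0))"
  proof
    assume a: "u0 \<in> D \<and> norm u0 = 1"
    have "((\<lambda>s. (U.hh s - U.hh 0) / s) \<longlongrightarrow> U.fp 0) (at_right 0)" using U.quot0 a by simp
    hence "((\<lambda>s. ereal ((h s - h 0) / s)) \<longlongrightarrow> ereal (U.fp 0)) (at_right 0)"
      unfolding hU lim_ereal .
    hence "d = ereal (U.fp 0)" using lim by (intro tendsto_unique[OF trivial_limit_at_right_real]) auto
    moreover have "U.fp 0 = - Re (cinner (A u0) u0)"
      using a by (simp add: U.fp_def U.hh_def U.T0 Re_cinner)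
    ultimately show "d = ereal (- Re (cinner (A u0) u0))" by simp
  qed
  have P5: "u0 \<in> D \<and> norm u0 = 1 \<longrightarrow> C1_on {0..} h \<and> Cinf_on {0<..} h"
    unfolding hU using U.C1 U.Cinf by simp
  show ?thesis using P1 P2 P3 d0 lim dINF dm dD P5 by blast
qed

end
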